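(* Let $R$ be an associative unital division ring over a field $F$ of characteristic $0$ and let $p,q\in F$. Suppose $u_{m,n}\in R$ and invertible $v_{m,n}\in R$ ($(m,n)\in\mathbb{Z}^2$) satisfy for all $(m,n)$ $$p\,v_{m,n+1}=u_{m,n+1}-u_{m+1,n},\qquad q\,v_{m,n}^{-1}=u_{m,n-1}-u_{m+1,n}.$$ Then for all $(m,n)$: $$(u_{m,n+1}-u_{m+1,n})(u_{m,n}-u_{m+1,n+1})=pq,\qquad (u_{m,n}-u_{m+1,n+1})(u_{m,n+1}-u_{m+1,n})=pq,$$ and $$p\,(v_{m,n}-v_{m+1,n+1})=q\,(v_{m,n+1}^{-1}-v_{m+1,n}^{-1}).$$ *)

theory Defs
  imports Main
begin

text \<open>An algebra structure of a unital ring R over a field F is given by its structure map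
  phi : F -> R, a unital ring homomorphism whose image lies in the centre of R.
  The F-action is then  c . x = phi c * x.\<close>
definition algebra_map :: "('f::field \<Rightarrow> 'r::ring_1) \<Rightarrow> bool" where
  "algebra_map phi \<longleftrightarrow>
     phi 1 = 1 \<and>
     (\<forall>a b. phi (a + b) = phi a + phi b) \<and>
     (\<forall>a b. phi (a * b) = phi a * phi b) \<and>
     (\<forall>a x. phi a * x = x * phi a)"

end

theory Submission
  imports Defs
begin

theorem theorem5p4:
  fixes phi :: "'f::field_char_0 \<Rightarrow> 'r::division_ring"
    and p q :: 'f
    and u v :: "int \<Rightarrow> int \<Rightarrow> 'r"
  assumes alg: "algebra_map phi"
    and inv: "\<And>m n. v m n \<noteq> 0"
    and eq1: "\<And>m n. phi p * v m (n + 1) = u m (n + 1) - u (m + 1) n"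
    and eq2: "\<And>m n. phi q * inverse (v m n) = u m (n - 1) - u (m + 1) n"
  shows "\<forall>m n.
     (u m (n + 1) - u (m + 1) n) * (u m n - u (m + 1) (n + 1)) = phi (p * q) \<and>
     (u m n - u (m + 1) (n + 1)) * (u m (n + 1) - u (m + 1) n) = phi (p * q) \<and>
     phi p * (v m n - v (m + 1) (n + 1)) =
       phi q * (inverse (v m (n + 1)) - inverse (v (m + 1) n))"
proof (intro allI conjI)
  fix m n :: int
  have c: "\<And>a x. phi a * x = x * phi a" and mul: "\<And>a b. phi (a * b) = phi a * phi b"
    using alg unfolding algebra_map_def by blast+
  have A: "u m (n + 1) - u (m + 1) n = phi p * v m (n + 1)" using eq1 by simp
  have B: "u m n - u (m + 1) (n + 1) = phi q * inverse (v m (n + 1))"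
    using eq2[of m "n+1"] by simp
  have vi: "v m (n + 1) * inverse (v m (n + 1)) = 1" "inverse (v m (n + 1)) * v m (n + 1) = 1"
    using inv by auto
  have "phi p * v m (n + 1) * (phi q * inverse (v m (n + 1)))
      = phi p * (v m (n + 1) * phi q) * inverse (v m (n + 1))"
    by (simp only: mult.assoc)
  also have "\<dots> = phi p * phi q * (v m (n + 1) * inverse (v m (n + 1)))"
    by (simp only: c[of q "v m (n + 1)", symmetric] mult.assoc)
  also have "\<dots> = phi (p * q)" using vi mul by simp
  finally show "(u m (n + 1) - u (m + 1) n) * (u m n - u (m + 1) (n + 1)) = phi (p * q)"
    using A B by simp
  have "phi q * inverse (v m (n + 1)) * (phi p * v m (n + 1))
      = phi q * (inverse (v m (n + 1)) * phi p) * v m (n + 1)"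
    by (simp only: mult.assoc)
  also have "\<dots> = phi q * phi p * (inverse (v m (n + 1)) * v m (n + 1))"
    by (simp only: c[of p "inverse (v m (n + 1))", symmetric] mult.assoc)
  also have "\<dots> = phi (p * q)" using vi mul[of p q] c[of p "phi q"] by simp
  finally show "(u m n - u (m + 1) (n + 1)) * (u m (n + 1) - u (m + 1) n) = phi (p * q)"
    using A B by simp
  have e1: "phi p * v m n = u m n - u (m + 1) (n - 1)" using eq1[of m "n-1"] by simp
  have e2: "phi p * v (m+1) (n+1) = u (m+1) (n+1) - u (m + 1 + 1) n" using eq1[of "m+1" n] by simp
  have e3: "phi q * inverse (v (m+1) n) = u (m+1) (n-1) - u (m + 1 + 1) n" using eq2[of "m+1" n] by simp
  show "phi p * (v m n - v (m + 1) (n + 1)) =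
       phi q * (inverse (v m (n + 1)) - inverse (v (m + 1) n))"
    by (simp only: right_diff_distrib e1 e2 e3 B[symmetric]) simp
qed

end
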